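(* Let $G_0^*$ be a $k$-uniform hypergraph on $n$ vertices and let $\{U_1,\dots,U_t\}$ be a partition of its vertex set into $t$ sets of size $p$ (so $n=pt$). Order the vertices of $G_0^*$ so that $U_i$ consists of the $((i-1)p+1)$-th through the $(ip)$-th vertices, and compute $A(G_0^* )$ in this order. For $i=1,\dots,t$ let $G_i^*$ be a $(k,r)$-regular hypergraph on $m\ge 2$ vertices (the same $k$, $r$, $m$ for all $i$). Put $$a=\begin{cases} p\left(\binom{p+m-2}{k-2}-\binom{p-2}{k-2}\right) & \text{if } p\ge 2,\\ 0 & \text{if } p=1,\end{cases}\qquad b=\binom{p+m-2}{k-2},\qquad c=\binom{p+m-2}{k-2}-\binom{m-2}{k-2},$$ and $Y_i=A(G_i^* )+c(J_m-I_m)$. Let $G^*=G_0^*\odot_p^t G_i^*$ be the generalized corona. Then for every real $\lambda$ such that $Y_i-\lambda I_m$ is invertible for all $i=1,\dots,t$, $$P_{A(G^* )}(\lambda)=\Big(\prod_{i=1}^t \det(Y_i-\lambda I_m)\Big)^p\,\det\!\Big(A(G_0^* )+I_t\otimes\Big(\big(a-\tfrac{b^2pm}{r(k-1)+c(m-1)-\lambda}\big)J_p-(a+\lambda)I_p\Big)\Big).$$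
   Context: All hypergraphs are finite and simple: a hypergraph $G^*=(V,E)$ consists of a finite vertex set $V$ and a set $E$ of subsets of $V$ (hyperedges), each of size at least $2$. It is $k$-uniform if every hyperedge has exactly $k$ elements, and $(k,r)$-regular if it is $k$-uniform and every vertex lies in exactly $r$ hyperedges. For a hypergraph with vertices $v_1,\dots,v_n$, the adjacency matrix $A(G^* )$ is the $n\times n$ matrix whose $(i,j)$ entry, for $i\ne j$, is the number of hyperedges containing both $v_i$ and $v_j$, and whose diagonal entries are $0$. $J_n$ (resp. $J_{a,b}$) is the all-ones $n\times n$ (resp. $a\times b$) matrix, $I_n$ the identity matrix, $\otimes$ the Kronecker product. For a square matrix $M$, $P_M(\lambda)=\det(M-\lambda I)$. Binomial coefficients $\binom{x}{y}$ with integers $x\ge 0$ and $y$ are $0$ when $y<0$ or $y>x$. Generalized corona: let $G_0^*$ be a $k$-uniform hypergraph with vertex set $V_0$, $\{U_1,\dots,U_t\}$ a partition of $V_0$ with $|U_i|=p$, and $G_1^*,\dots,G_t^*$ $k$-uniform hypergraphs. The generalized corona $G_0^*\odot_p^t G_i^*$ is the $k$-uniform hypergraph obtained as follows: for each $i$ take $p$ copies $G_i^{*(1)},\dots,G_i^{*(p)}$ of $G_i^*$, all copies pairwise vertex-disjoint and disjoint from $V_0$. The vertex set is $V_0$ together with the vertices of all copies; the hyperedges are the hyperedges of $G_0^*$, the hyperedges of every copy, and, for every $i\in\{1,\dots,t\}$ and $j\in\{1,\dots,p\}$, every $k$-element subset of $U_i\cup V(G_i^{*(j)})$ that meets both $U_i$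 and $V(G_i^{*(j)})$. *)

theory Defs
  imports "Jordan_Normal_Form.Determinant" "Jordan_Normal_Form.Matrix"
begin

definition hypergraph :: "'a set \<Rightarrow> 'a set set \<Rightarrow> bool" where
  "hypergraph V E \<longleftrightarrow> finite V \<and> (\<forall>e\<in>E. e \<subseteq> V \<and> card e \<ge> 2)"

definition k_uniform :: "'a set \<Rightarrow> 'a set set \<Rightarrow> nat \<Rightarrow> bool" where
  "k_uniform V E k \<longleftrightarrow> hypergraph V E \<and> (\<forall>e\<in>E. card e = k)"

definition kr_regular :: "'a set \<Rightarrow> 'a set set \<Rightarrow> nat \<Rightarrow> nat \<Rightarrow> bool" where
  "kr_regular V E k r \<longleftrightarrow> k_uniform V E k \<and> (\<forall>v\<in>V. card {e\<in>E. v \<in> e} = r)"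

definition adj_mat :: "nat \<Rightarrow> nat set set \<Rightarrow> real mat" where
  "adj_mat N E = mat N N (\<lambda>(i,j). if i = j then 0 else real (card {e\<in>E. i \<in> e \<and> j \<in> e}))"

definition char_val :: "real mat \<Rightarrow> real \<Rightarrow> real" where
  "char_val M lam = det (M - lam \<cdot>\<^sub>m 1\<^sub>m (dim_row M))"

definition J_mat :: "nat \<Rightarrow> real mat" where
  "J_mat n = mat n n (\<lambda>_. 1)"

definition kron :: "real mat \<Rightarrow> real mat \<Rightarrow> real mat" where
  "kron A B = mat (dim_row A * dim_row B) (dim_col A * dim_col B)
     (\<lambda>(i,j). A $$ (i div dim_row B, j div dim_col B) * B $$ (i mod dim_row B, j mod dim_col B))"

definition binom :: "nat \<Rightarrow> int \<Rightarrow> nat" where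
  "binom x y = (if y < 0 then 0 else x choose (nat y))"

(* Generalized corona G_0 \<odot>_p^t G_i, with concrete vertex labels:
   G_0 has vertices 0..<p*t, U_i = {i*p ..< (i+1)*p} (i < t);
   G_i (i < t) has vertices 0..<m;
   vertex v of copy j (j < p) of G_i is labelled p*t + (i*p + j)*m + v. *)
definition part_U :: "nat \<Rightarrow> nat \<Rightarrow> nat set" where
  "part_U p i = {i*p ..< (i+1)*p}"

definition copy_vtx :: "nat \<Rightarrow> nat \<Rightarrow> nat \<Rightarrow> nat \<Rightarrow> nat \<Rightarrow> nat \<Rightarrow> nat" where
  "copy_vtx p t m i j v = p*t + (i*p + j)*m + v"

definition copy_W :: "nat \<Rightarrow> nat \<Rightarrow> nat \<Rightarrow> nat \<Rightarrow> nat \<Rightarrow> nat set" where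
  "copy_W p t m i j = copy_vtx p t m i j ` {0..<m}"

definition corona_edges ::
  "nat \<Rightarrow> nat \<Rightarrow> nat \<Rightarrow> nat \<Rightarrow> nat set set \<Rightarrow> (nat \<Rightarrow> nat set set) \<Rightarrow> nat set set" where
  "corona_edges k p t m E0 Gs =
     E0
     \<union> (\<Union>i<t. \<Union>j<p. (\<lambda>e. copy_vtx p t m i j ` e) ` Gs i)
     \<union> (\<Union>i<t. \<Union>j<p. {S. S \<subseteq> part_U p i \<union> copy_W p t m i j \<and> card S = k
                           \<and> S \<inter> part_U p i \<noteq> {} \<and> S \<inter> copy_W p t m i j \<noteq> {}})"

definition corona_size :: "nat \<Rightarrow> nat \<Rightarrow> nat \<Rightarrow> nat" where
  "corona_size p t m = p*t + t*p*m"

end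

theory Submission
  imports Defs
begin


lemma schur_det:
  fixes P B C Q X :: "real mat"
  assumes P: "P \<in> carrier_mat n1 n1" and B: "B \<in> carrier_mat n1 n2"
    and C: "C \<in> carrier_mat n2 n1" and Q: "Q \<in> carrier_mat n2 n2"
    and X: "X \<in> carrier_mat n2 n1" and QX: "Q * X = C"
  shows "det (four_block_mat P B C Q) = det (P - B * X) * det Q"
proof -
  let ?L = "four_block_mat (1\<^sub>m n1) (0\<^sub>m n1 n2) (- X) (1\<^sub>m n2)"
  have L: "?L \<in> carrier_mat (n1+n2) (n1+n2)" by simp
  have dL: "det ?L = 1"
    by (subst det_four_block_mat_upper_right_zero[of _ n1 _ n2], use X in auto)
  have prod: "four_block_mat P B C Q * ?L
     = four_block_mat (P * 1\<^sub>m n1 + B * (- X)) (P * 0\<^sub>m n1 n2 + B * 1\<^sub>m n2)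
        (C * 1\<^sub>m n1 + Q * (- X)) (C * 0\<^sub>m n1 n2 + Q * 1\<^sub>m n2)"
    by (rule mult_four_block_mat[OF P B C Q], use X in auto)
  have e1: "P * 1\<^sub>m n1 + B * (- X) = P - B * X" using P B X
  proof -
    have "P * 1\<^sub>m n1 + B * (- X) = P + - (B * X)" using P B X by (simp add: uminus_mult_right_mat)
    also have "\<dots> = P - B * X" by (rule add_uminus_minus_mat[OF P], use B X in auto)
    finally show ?thesis .
  qed
  have e2: "P * 0\<^sub>m n1 n2 + B * 1\<^sub>m n2 = B" using P B by simp
  have e3: "C * 1\<^sub>m n1 + Q * (- X) = 0\<^sub>m n2 n1" using C Q X QX
  proof -
    have "C * 1\<^sub>m n1 + Q * (- X) = C + - (Q * X)" using C Q X by (simp add: uminus_mult_right_mat)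
    also have "\<dots> = C - C" using add_uminus_minus_mat[OF C C] QX by simp
    finally show ?thesis using C by simp
  qed
  have e4: "C * 0\<^sub>m n1 n2 + Q * 1\<^sub>m n2 = Q" using C Q by simp
  have "det (four_block_mat P B C Q) = det (four_block_mat P B C Q * ?L)"
    using det_mult[OF _ L, of "four_block_mat P B C Q"] dL P Q by simp
  also have "\<dots> = det (four_block_mat (P - B*X) B (0\<^sub>m n2 n1) Q)"
    using prod e1 e2 e3 e4 by simp
  also have "\<dots> = det (P - B*X) * det Q"
    by (rule det_four_block_mat_lower_left_zero[of _ n1 _ n2], use P B X Q in auto)
  finally show ?thesis .
qed

lemma div_eq_iff:
  fixes x m q :: nat assumes "0 < m"
  shows "x div m = q \<longleftrightarrow> q*m \<le> x \<and> x < q*m + m"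
proof
  assume "x div m = q"
  moreover have "x div m * m \<le> x" by (simp add: div_times_less_eq_dividend)
  moreover have "x < x div m * m + m" using assms
    by (metis add.commute div_mult_mod_eq mod_less_divisor add_less_mono1 nat_add_left_cancel_less)
  ultimately show "q*m \<le> x \<and> x < q*m + m" by simp
next
  assume "q*m \<le> x \<and> x < q*m + m"
  then show "x div m = q" by (intro div_nat_eqI) (auto simp: mult.commute)
qed

definition bdiag :: "nat \<Rightarrow> nat \<Rightarrow> (nat \<Rightarrow> real mat) \<Rightarrow> real mat" where
  "bdiag n m F = mat (n*m) (n*m) (\<lambda>(x,y). if x div m = y div m then F (x div m) $$ (x mod m, y mod m) else 0)"

lemma det_bdiag:
  assumes F: "\<And>q. q < n \<Longrightarrow> F q \<in> carrier_mat m m" and m: "m > 0"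
  shows "det (bdiag n m F) = (\<Prod>q<n. det (F q))"
  using F
proof (induction n)
  case 0
  then show ?case by (simp add: bdiag_def)
next
  case (Suc n)
  have Fn: "F n \<in> carrier_mat m m" using Suc by auto
  have eq: "bdiag (Suc n) m F = four_block_mat (bdiag n m F) (0\<^sub>m (n*m) m) (0\<^sub>m m (n*m)) (F n)"
  proof (rule eq_matI)
    fix i j assume i: "i < dim_row (four_block_mat (bdiag n m F) (0\<^sub>m (n*m) m) (0\<^sub>m m (n*m)) (F n))"
      and j: "j < dim_col (four_block_mat (bdiag n m F) (0\<^sub>m (n*m) m) (0\<^sub>m m (n*m)) (F n))"
    from i j Fn have i': "i < n*m + m" and j': "j < n*m+m" by (auto simp: bdiag_def)
    have ilt: "i < n*m \<longleftrightarrow> i div m < n" using m by (simp add: div_less_iff_less_mult)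
    have jlt: "j < n*m \<longleftrightarrow> j div m < n" using m by (simp add: div_less_iff_less_mult)
    have idiv: "\<not> i < n*m \<Longrightarrow> i div m = n" using div_eq_iff[OF m, of i n] i' by simp
    have jdiv: "\<not> j < n*m \<Longrightarrow> j div m = n" using div_eq_iff[OF m, of j n] j' by simp
    have imod: "\<not> i < n*m \<Longrightarrow> i mod m = i - n*m"
    proof -
      assume "\<not> i < n*m"
      then have "i div m = n" by (rule idiv)
      moreover have "i mod m + i div m * m = i" by (rule mod_div_mult_eq)
      ultimately show ?thesis by (simp add: mult.commute)
    qed
    have jmod: "\<not> j < n*m \<Longrightarrow> j mod m = j - n*m"
    proof -
      assume "\<not> j < n*m"
      then have "j div m = n" by (rule jdiv)
      moreover have "j mod m + j div m * m = j" by (rule mod_div_mult_eq)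
      ultimately show ?thesis by (simp add: mult.commute)
    qed
    show "bdiag (Suc n) m F $$ (i, j) = four_block_mat (bdiag n m F) (0\<^sub>m (n*m) m) (0\<^sub>m m (n*m)) (F n) $$ (i, j)"
      using i' j' Fn ilt jlt idiv jdiv imod jmod
      by (cases "i < n*m"; cases "j < n*m"; simp add: bdiag_def)
  next
    show "dim_row (bdiag (Suc n) m F) = dim_row (four_block_mat (bdiag n m F) (0\<^sub>m (n*m) m) (0\<^sub>m m (n*m)) (F n))"
      using Fn by (simp add: bdiag_def)
    show "dim_col (bdiag (Suc n) m F) = dim_col (four_block_mat (bdiag n m F) (0\<^sub>m (n*m) m) (0\<^sub>m m (n*m)) (F n))"
      using Fn by (simp add: bdiag_def)
  qed
  have "det (bdiag (Suc n) m F) = det (bdiag n m F) * det (F n)"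
    unfolding eq
    by (rule det_four_block_mat_upper_right_zero[of _ "n*m" _ m], use Fn in \<open>auto simp: bdiag_def\<close>)
  then show ?case using Suc by simp
qed

lemma prod_div_reindex:
  fixes f :: "nat \<Rightarrow> real"
  shows "(\<Prod>q<t*p. f (q div p)) = (\<Prod>i<t. f i) ^ p"
proof (induction t)
  case 0 then show ?case by simp
next
  case (Suc t)
  have e: "{..<Suc t * p} = {..<t*p} \<union> {t*p..<t*p+p}" by auto
  have "(\<Prod>q<Suc t*p. f (q div p)) = (\<Prod>q<t*p. f (q div p)) * (\<Prod>q\<in>{t*p..<t*p+p}. f (q div p))"
    unfolding e by (rule prod.union_disjoint) auto
  also have "(\<Prod>q\<in>{t*p..<t*p+p}. f (q div p)) = (\<Prod>q\<in>{t*p..<t*p+p}. f t)"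
  proof (rule prod.cong)
    fix q assume q: "q \<in> {t*p..<t*p+p}"
    then have "0 < p" by auto
    then have "q div p = t" using div_eq_iff[of p q t] q by auto
    then show "f (q div p) = f t" by simp
  qed simp
  also have "\<dots> = f t ^ p" by simp
  finally show ?case using Suc by (simp add: power_mult_distrib)
qed

lemma invertible_kernel:
  fixes A :: "real mat"
  assumes A: "A \<in> carrier_mat n n" and inv: "invertible_mat A" and v: "v \<in> carrier_vec n" and Av: "A *\<^sub>v v = 0\<^sub>v n"
  shows "v = 0\<^sub>v n"
proof -
  obtain B where B1: "A * B = 1\<^sub>m n" and B2: "B * A = 1\<^sub>m (dim_row B)"
    using inv A unfolding invertible_mat_def inverts_mat_def by auto
  have "dim_col B = n" using arg_cong[OF B1, of dim_col] by simp
  moreover have "dim_row B = n" using arg_cong[OF B2, of dim_col] A by simp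
  ultimately have B: "B \<in> carrier_mat n n" by auto
  have "v = (B * A) *\<^sub>v v" using v B2 B by simp
  also have "\<dots> = B *\<^sub>v (A *\<^sub>v v)" using A B v by (simp add: assoc_mult_mat_vec)
  also have "\<dots> = 0\<^sub>v n" using Av B by (intro eq_vecI) auto
  finally show ?thesis .
qed

lemma card_pairs:
  fixes A :: "'a set"
  assumes A: "finite A" and x: "x \<in> A" and y: "y \<in> A" and xy: "x \<noteq> y"
  shows "card {S. S \<subseteq> A \<and> card S = k \<and> x \<in> S \<and> y \<in> S} = binom (card A - 2) (int k - 2)"
proof (cases "k < 2")
  case True
  have "{S. S \<subseteq> A \<and> card S = k \<and> x \<in> S \<and> y \<in> S} = {}"
  proof (rule ccontr)
    assume "{S. S \<subseteq> A \<and> card S = k \<and> x \<in> S \<and> y \<in> S} \<noteq> {}"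
    then obtain S where S: "S \<subseteq> A" "card S = k" "x \<in> S" "y \<in> S" by auto
    have "finite S" using S A finite_subset by auto
    then have "card {x,y} \<le> card S" using S by (intro card_mono) auto
    then show False using xy S True by simp
  qed
  then have "card {S. S \<subseteq> A \<and> card S = k \<and> x \<in> S \<and> y \<in> S} = 0" by (simp only: card.empty)
  then show ?thesis using True by (simp add: binom_def)
next
  case False
  let ?L = "{S. S \<subseteq> A \<and> card S = k \<and> x \<in> S \<and> y \<in> S}"
  let ?R = "{T. T \<subseteq> A - {x,y} \<and> card T = k - 2}"
  have bij: "bij_betw (\<lambda>S. S - {x,y}) ?L ?R"
  proof (rule bij_betw_byWitness[where f' = "\<lambda>T. T \<union> {x,y}"])
    show "\<forall>S\<in>?L. S - {x, y} \<union> {x, y} = S" by auto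
    show "\<forall>T\<in>?R. T \<union> {x, y} - {x, y} = T" by auto
    show "(\<lambda>S. S - {x, y}) ` ?L \<subseteq> ?R"
    proof
      fix T assume "T \<in> (\<lambda>S. S - {x, y}) ` ?L"
      then obtain S where S: "S \<in> ?L" "T = S - {x,y}" by auto
      have "finite S" using S A finite_subset by auto
      then have "card T = card S - card {x,y}" using S by (simp add: card_Diff_subset)
      then show "T \<in> ?R" using S xy by auto
    qed
    show "(\<lambda>T. T \<union> {x, y}) ` ?R \<subseteq> ?L"
    proof
      fix S assume "S \<in> (\<lambda>T. T \<union> {x, y}) ` ?R"
      then obtain T where T: "T \<in> ?R" "S = T \<union> {x,y}" by auto
      have "finite T" using T A finite_subset by blast
      then have "card S = card T + card {x,y}" using T by (simp only: T(2), intro card_Un_disjoint) auto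
      then show "S \<in> ?L" using T xy x y False by auto
    qed
  qed
  have "card ?L = card ?R" using bij by (rule bij_betw_same_card)
  also have "\<dots> = card (A - {x,y}) choose (k-2)" using A by (simp add: n_subsets)
  also have "card (A - {x,y}) = card A - 2" using A x y xy by (simp add: card_Diff_subset)
  finally show ?thesis using False by (simp add: binom_def nat_diff_distrib)
qed

definition Tset :: "nat \<Rightarrow> nat set \<Rightarrow> nat \<Rightarrow> nat \<Rightarrow> nat set set" where
  "Tset k A x y = {S. S \<subseteq> A \<and> card S = k \<and> x \<in> S \<and> y \<in> S}"

lemma U_iff: "0 < p \<Longrightarrow> z \<in> part_U p i \<longleftrightarrow> z div p = i"
  unfolding part_U_def using div_eq_iff[of p z i] by auto

lemma copy_W_eq: "copy_W p t m i j = {p*t+(i*p+j)*m ..< p*t+(i*p+j)*m+m}"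
proof -
  have "copy_W p t m i j = (\<lambda>v. v + (p*t+(i*p+j)*m)) ` {0..<m}"
    unfolding copy_W_def copy_vtx_def by (simp add: add.commute)
  also have "\<dots> = {0 + (p*t+(i*p+j)*m) ..< m + (p*t+(i*p+j)*m)}" by (rule image_add_atLeastLessThan')
  finally show ?thesis by (simp add: add.commute)
qed

lemma W_iff: "0 < m \<Longrightarrow> z \<in> copy_W p t m i j \<longleftrightarrow> p*t \<le> z \<and> (z - p*t) div m = i*p+j"
  unfolding copy_W_eq using div_eq_iff[of m "z - p*t" "i*p+j"] by auto

lemma ipj: fixes i j p q :: nat assumes "j < p" shows "(i*p+j = q) \<longleftrightarrow> (i = q div p \<and> j = q mod p)"
proof
  assume q: "i*p+j = q"
  have p: "0 < p" using assms by simp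
  have d: "(i*p+j) div p = i" using div_eq_iff[OF p] assms by simp
  moreover have "(i*p+j) mod p + (i*p+j) div p * p = i*p+j" by (rule mod_div_mult_eq)
  ultimately have "(i*p+j) mod p = j" by simp
  then show "i = q div p \<and> j = q mod p" using q d by auto
next
  assume "i = q div p \<and> j = q mod p"
  then show "i*p+j = q" by simp
qed

lemma card_U: "card (part_U p i) = p" unfolding part_U_def by simp
lemma card_W: "card (copy_W p t m i j) = m" unfolding copy_W_eq by simp

lemma U_lt: "0 < p \<Longrightarrow> i < t \<Longrightarrow> z \<in> part_U p i \<Longrightarrow> z < p*t"
proof -
  assume p: "0 < p" and i: "i < t" and z: "z \<in> part_U p i"
  have "z div p = i" using U_iff[OF p] z by simp
  then have "z div p < t" using i by simp
  then show "z < p*t" using p by (simp add: div_less_iff_less_mult mult.commute)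
qed

lemma W_ge: "z \<in> copy_W p t m i j \<Longrightarrow> p*t \<le> z"
  unfolding copy_W_eq by auto

lemma W_lt: "i < t \<Longrightarrow> j < p \<Longrightarrow> z \<in> copy_W p t m i j \<Longrightarrow> z < p*t + t*p*m"
proof -
  assume i: "i < t" and j: "j < p" and z: "z \<in> copy_W p t m i j"
  have "i*p+j < t*p"
  proof -
    have "i*p + j < i*p + p" using j by simp
    also have "\<dots> = Suc i * p" by simp
    also have "\<dots> \<le> t*p" using i by (intro mult_le_mono1) simp
    finally show ?thesis .
  qed
  then have "(i*p+j)*m + m \<le> t*p*m"
    by (metis Suc_leI add.commute mult_Suc mult_le_mono1)
  then show ?thesis using z unfolding copy_W_eq by auto
qed

lemma copy_sub_W: "e \<subseteq> {0..<m} \<Longrightarrow> copy_vtx p t m i j ` e \<subseteq> copy_W p t m i j"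
  unfolding copy_W_def by auto

lemma corona_mem:
  "e \<in> corona_edges k p t m E0 Gs \<longleftrightarrow> e \<in> E0
     \<or> (\<exists>i<t. \<exists>j<p. \<exists>e'\<in>Gs i. e = copy_vtx p t m i j ` e')
     \<or> (\<exists>i<t. \<exists>j<p. e \<subseteq> part_U p i \<union> copy_W p t m i j \<and> card e = k
                           \<and> e \<inter> part_U p i \<noteq> {} \<and> e \<inter> copy_W p t m i j \<noteq> {})"
  unfolding corona_edges_def by blast

lemma F_C1:
  assumes p: "0<p" and m: "0<m" and E0: "\<forall>e\<in>E0. e \<subseteq> {0..<p*t}"
    and Gs: "\<forall>i<t. \<forall>e\<in>Gs i. e \<subseteq> {0..<m}" and x: "x < p*t" and y: "y < p*t"
  shows "{e \<in> corona_edges k p t m E0 Gs. x\<in>e \<and> y\<in>e} = {e\<in>E0. x\<in>e \<and> y\<in>e}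
     \<union> (if x div p = y div p then (\<Union>j<p. Tset k (part_U p (x div p) \<union> copy_W p t m (x div p) j) x y
                                        - Tset k (part_U p (x div p)) x y) else {})"
proof (intro Set.set_eqI iffI)
  fix e assume e: "e \<in> {e \<in> corona_edges k p t m E0 Gs. x\<in>e \<and> y\<in>e}"
  then have xe: "x \<in> e" and ye: "y \<in> e" by auto
  from e have "e \<in> E0
     \<or> (\<exists>i<t. \<exists>j<p. \<exists>e'\<in>Gs i. e = copy_vtx p t m i j ` e')
     \<or> (\<exists>i<t. \<exists>j<p. e \<subseteq> part_U p i \<union> copy_W p t m i j \<and> card e = k
                           \<and> e \<inter> part_U p i \<noteq> {} \<and> e \<inter> copy_W p t m i j \<noteq> {})"
    using corona_mem by blast
  then show "e \<in> {e\<in>E0. x\<in>e \<and> y\<in>e}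
     \<union> (if x div p = y div p then (\<Union>j<p. Tset k (part_U p (x div p) \<union> copy_W p t m (x div p) j) x y
                                        - Tset k (part_U p (x div p)) x y) else {})"
  proof (elim disjE exE bexE conjE)
    assume "e \<in> E0" then show ?thesis using xe ye by auto
  next
    fix i j e' assume i: "i < t" and j: "j < p" and e': "e' \<in> Gs i" and ee: "e = copy_vtx p t m i j ` e'"
    have "x \<in> copy_W p t m i j" using copy_sub_W[of e' m p t i j] Gs i e' ee xe by auto
    then have False using W_ge x by fastforce
    then show ?thesis by blast
  next
    fix i j assume i: "i < t" and j: "j < p" and sub: "e \<subseteq> part_U p i \<union> copy_W p t m i j"
      and ck: "card e = k" and eU: "e \<inter> part_U p i \<noteq> {}" and eW: "e \<inter> copy_W p t m i j \<noteq> {}"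
    have xU: "x \<in> part_U p i" using sub xe W_ge x by fastforce
    have yU: "y \<in> part_U p i" using sub ye W_ge y by fastforce
    have xi: "x div p = i" using xU U_iff p by blast
    have yi: "y div p = i" using yU U_iff p by blast
    have nsub: "\<not> e \<subseteq> part_U p i"
    proof
      assume "e \<subseteq> part_U p i"
      then obtain z where "z \<in> part_U p i" "z \<in> copy_W p t m i j" using eW by auto
      then show False using U_lt[OF p i] W_ge by fastforce
    qed
    have "e \<in> Tset k (part_U p (x div p) \<union> copy_W p t m (x div p) j) x y - Tset k (part_U p (x div p)) x y"
      using sub ck xe ye nsub xi unfolding Tset_def by auto
    then show ?thesis using xi yi j by auto
  qed
next
  fix e assume e: "e \<in> {e\<in>E0. x\<in>e \<and> y\<in>e}
     \<union> (if x div p = y div p then (\<Union>j<p. Tset k (part_U p (x div p) \<union> copy_W p t m (x div p) j) x y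
                                        - Tset k (part_U p (x div p)) x y) else {})"
  show "e \<in> {e \<in> corona_edges k p t m E0 Gs. x\<in>e \<and> y\<in>e}"
  proof (cases "e \<in> E0")
    case True then show ?thesis using e unfolding corona_edges_def by (auto split: if_splits simp: Tset_def)
  next
    case False
    then obtain j where j: "j < p" and eT: "e \<in> Tset k (part_U p (x div p) \<union> copy_W p t m (x div p) j) x y"
      and nT: "e \<notin> Tset k (part_U p (x div p)) x y"
      using e by (auto split: if_splits)
    let ?i = "x div p"
    have i: "?i < t" using x p by (simp add: div_less_iff_less_mult mult.commute)
    have sub: "e \<subseteq> part_U p ?i \<union> copy_W p t m ?i j" and ck: "card e = k" and xe: "x \<in> e" and ye: "y \<in> e"
      using eT unfolding Tset_def by auto
    have "\<not> e \<subseteq> part_U p ?i" using nT ck xe ye unfolding Tset_def by auto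
    then have eW: "e \<inter> copy_W p t m ?i j \<noteq> {}" using sub by auto
    have eU: "e \<inter> part_U p ?i \<noteq> {}" using xe U_iff[OF p, of x ?i] by auto
    have "e \<in> corona_edges k p t m E0 Gs"
      unfolding corona_mem using i j sub ck eU eW by blast
    then show ?thesis using xe ye by auto
  qed
qed



lemma card_Tdiff:
  assumes A: "finite A" and B: "B \<subseteq> A" and x: "x \<in> B" and y: "y \<in> B" and xy: "x \<noteq> y"
  shows "real (card (Tset k A x y - Tset k B x y)) = real (binom (card A - 2) (int k - 2)) - real (binom (card B - 2) (int k - 2))"
proof -
  have fB: "finite B" using finite_subset[OF B A] .
  have sub: "Tset k B x y \<subseteq> Tset k A x y" using B unfolding Tset_def by auto
  have fin: "finite (Tset k A x y)" unfolding Tset_def by (rule finite_subset[of _ "Pow A"]) (use A in auto)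
  have "card (Tset k A x y - Tset k B x y) = card (Tset k A x y) - card (Tset k B x y)"
    using card_Diff_subset[OF finite_subset[OF sub fin] sub] .
  moreover have "card (Tset k B x y) \<le> card (Tset k A x y)" using sub fin by (rule card_mono[rotated])
  ultimately have "real (card (Tset k A x y - Tset k B x y)) = real (card (Tset k A x y)) - real (card (Tset k B x y))"
    by simp
  also have "card (Tset k A x y) = binom (card A - 2) (int k - 2)"
    unfolding Tset_def using card_pairs[OF A, of x y k] x y xy B by blast
  also have "card (Tset k B x y) = binom (card B - 2) (int k - 2)"
    unfolding Tset_def using card_pairs[OF fB x y xy, of k] .
  finally show ?thesis .
qed

lemma card_UW: "0 < p \<Longrightarrow> i < t \<Longrightarrow> card (part_U p i \<union> copy_W p t m i j) = p + m"
proof -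
  assume p: "0 < p" and i: "i < t"
  have "part_U p i \<inter> copy_W p t m i j = {}" using U_lt[OF p i] W_ge by fastforce
  moreover have "finite (part_U p i)" "finite (copy_W p t m i j)" unfolding part_U_def copy_W_eq by simp_all
  ultimately have "card (part_U p i \<union> copy_W p t m i j) = card (part_U p i) + card (copy_W p t m i j)"
    by (intro card_Un_disjoint) auto
  then show ?thesis by (simp only: card_U card_W)
qed

lemma finite_UW: "finite (part_U p i \<union> copy_W p t m i j)"
  unfolding part_U_def copy_W_eq by simp

lemma card_C1:
  assumes p: "0<p" and m: "0<m" and E0: "\<forall>e\<in>E0. e \<subseteq> {0..<p*t}"
    and Gs: "\<forall>i<t. \<forall>e\<in>Gs i. e \<subseteq> {0..<m}" and x: "x < p*t" and y: "y < p*t" and xy: "x \<noteq> y"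
  shows "real (card {e \<in> corona_edges k p t m E0 Gs. x\<in>e \<and> y\<in>e}) = real (card {e\<in>E0. x\<in>e \<and> y\<in>e})
     + (if x div p = y div p then real p * (real (binom (p+m-2) (int k - 2)) - real (binom (p-2) (int k - 2))) else 0)"
proof -
  let ?i = "x div p"
  let ?D = "\<lambda>j. Tset k (part_U p ?i \<union> copy_W p t m ?i j) x y - Tset k (part_U p ?i) x y"
  have i: "?i < t" using x p by (simp add: div_less_iff_less_mult mult.commute)
  have finE0: "finite E0" by (rule finite_subset[of E0 "Pow {0..<p*t}"]) (use E0 in auto)
  show ?thesis
  proof (cases "x div p = y div p")
    case False
    then show ?thesis using F_C1[OF p m E0 Gs x y, of k] by simp
  next
    case True
    have xU: "x \<in> part_U p ?i" using U_iff[OF p] by simp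
    have yU: "y \<in> part_U p ?i" using U_iff[OF p] True by simp
    have finD: "finite (?D j)" for j
      unfolding Tset_def by (rule finite_subset[of _ "Pow (part_U p ?i \<union> copy_W p t m ?i j)"]) (auto simp: part_U_def copy_W_eq)
    have cardD: "real (card (?D j)) = real (binom (p+m-2) (int k - 2)) - real (binom (p-2) (int k - 2))" for j
    proof -
      have "real (card (?D j)) = real (binom (card (part_U p ?i \<union> copy_W p t m ?i j) - 2) (int k - 2))
             - real (binom (card (part_U p ?i) - 2) (int k - 2))"
        by (rule card_Tdiff) (use xU yU xy in \<open>auto simp: part_U_def copy_W_eq\<close>)
      then show ?thesis using card_UW[OF p i] card_U by simp
    qed
    have disj: "\<forall>j\<in>{..<p}. \<forall>j'\<in>{..<p}. j \<noteq> j' \<longrightarrow> ?D j \<inter> ?D j' = {}"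
    proof (intro ballI impI)
      fix j j' assume j: "j \<in> {..<p}" and j': "j' \<in> {..<p}" and jj: "j \<noteq> j'"
      show "?D j \<inter> ?D j' = {}"
      proof (rule ccontr)
        assume "?D j \<inter> ?D j' \<noteq> {}"
        then obtain S where S1: "S \<in> ?D j" and S2: "S \<in> ?D j'" by blast
        from S1 obtain z where zS: "z \<in> S" and zU: "z \<notin> part_U p ?i"
          unfolding Tset_def by auto
        have s1: "S \<subseteq> part_U p ?i \<union> copy_W p t m ?i j" using S1 unfolding Tset_def by blast
        have s2: "S \<subseteq> part_U p ?i \<union> copy_W p t m ?i j'" using S2 unfolding Tset_def by blast
        have "z \<in> copy_W p t m ?i j" using s1 zS zU by blast
        moreover have "z \<in> copy_W p t m ?i j'" using s2 zS zU by blast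
        ultimately have "(z - p*t) div m = ?i*p+j" "(z - p*t) div m = ?i*p+j'" using W_iff[OF m] by simp_all
        then have "?i*p+j = ?i*p+j'" by simp
        then show False using jj by simp
      qed
    qed
    have dE: "{e\<in>E0. x\<in>e \<and> y\<in>e} \<inter> (\<Union>j<p. ?D j) = {}"
    proof (rule ccontr)
      assume "{e\<in>E0. x\<in>e \<and> y\<in>e} \<inter> (\<Union>j<p. ?D j) \<noteq> {}"
      then obtain S j where SE: "S \<in> E0" and S: "S \<in> ?D j" by blast
      from S obtain z where zS: "z \<in> S" and zU: "z \<notin> part_U p ?i"
        unfolding Tset_def by auto
      have "z \<in> copy_W p t m ?i j" using S zS zU unfolding Tset_def by auto
      then have "p*t \<le> z" by (rule W_ge)
      moreover have "z \<in> {0..<p*t}" using E0 SE zS by blast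
      then have "z < p*t" by simp
      ultimately show False by simp
    qed
    have "card {e \<in> corona_edges k p t m E0 Gs. x\<in>e \<and> y\<in>e} = card {e\<in>E0. x\<in>e \<and> y\<in>e} + card (\<Union>j<p. ?D j)"
    proof -
      have f1: "finite {e\<in>E0. x\<in>e \<and> y\<in>e}" using finE0 by simp
      have f2: "finite (\<Union>j<p. ?D j)" by (intro finite_UN_I finite_lessThan finD)
      have "{e \<in> corona_edges k p t m E0 Gs. x\<in>e \<and> y\<in>e} = {e\<in>E0. x\<in>e \<and> y\<in>e} \<union> (\<Union>j<p. ?D j)"
        using F_C1[OF p m E0 Gs x y, of k] True by simp
      then show ?thesis using card_Un_disjoint[OF f1 f2 dE] by simp
    qed
    moreover have "card (\<Union>j<p. ?D j) = (\<Sum>j<p. card (?D j))"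
      by (rule card_UN_disjoint[OF finite_lessThan _ disj]) (intro ballI finD)
    ultimately have "real (card {e \<in> corona_edges k p t m E0 Gs. x\<in>e \<and> y\<in>e}) = real (card {e\<in>E0. x\<in>e \<and> y\<in>e}) + (\<Sum>j<p. real (card (?D j)))"
      by (simp only: of_nat_add of_nat_sum)
    also have "(\<Sum>j<p. real (card (?D j))) = real p * (real (binom (p+m-2) (int k - 2)) - real (binom (p-2) (int k - 2)))"
      using cardD by (simp only: sum.cong[OF refl cardD] sum_constant) simp
    finally show ?thesis using True by simp
  qed
qed

lemma copy_vtx_div: "v < m \<Longrightarrow> (copy_vtx p t m i j v - p*t) div m = i*p+j"
  unfolding copy_vtx_def using div_eq_iff[of m "(i*p+j)*m + v" "i*p+j"] by simp

lemma copy_vtx_mod: "v < m \<Longrightarrow> (copy_vtx p t m i j v - p*t) mod m = v"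
  unfolding copy_vtx_def by simp

lemma copy_vtx_inj: "inj (copy_vtx p t m i j)"
  unfolding copy_vtx_def by (rule injI) simp

lemma vtx_decomp:
  assumes m: "0 < m" and x: "p*t \<le> x" and q: "(x - p*t) div m = i*p+j"
  shows "x = copy_vtx p t m i j ((x - p*t) mod m)"
proof -
  have "(x - p*t) mod m + (x - p*t) div m * m = x - p*t" by (rule mod_div_mult_eq)
  then show ?thesis unfolding copy_vtx_def using q x by simp
qed

lemma F_C2:
  assumes p: "0<p" and m: "0<m" and E0: "\<forall>e\<in>E0. e \<subseteq> {0..<p*t}"
    and Gs: "\<forall>i<t. \<forall>e\<in>Gs i. e \<subseteq> {0..<m}" and x: "x < p*t" and y1: "p*t \<le> y" and y2: "y < p*t + t*p*m"
  shows "{e \<in> corona_edges k p t m E0 Gs. x\<in>e \<and> y\<in>e} =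
     (if x div p = (y - p*t) div m div p
      then Tset k (part_U p (x div p) \<union> copy_W p t m (x div p) ((y - p*t) div m mod p)) x y else {})"
proof -
  let ?q = "(y - p*t) div m"
  let ?i1 = "?q div p" and ?j1 = "?q mod p"
  have q: "?q < t*p" using y1 y2 m by (simp add: div_less_iff_less_mult)
  have i1: "?i1 < t" using q p by (simp add: div_less_iff_less_mult)
  have j1: "?j1 < p" using p by simp
  have yW: "y \<in> copy_W p t m ?i1 ?j1" unfolding W_iff[OF m] using y1 by simp
  show ?thesis
  proof (intro Set.set_eqI iffI)
    fix e assume e: "e \<in> {e \<in> corona_edges k p t m E0 Gs. x\<in>e \<and> y\<in>e}"
    then have xe: "x \<in> e" and ye: "y \<in> e" by auto
    from e have "e \<in> E0
       \<or> (\<exists>i<t. \<exists>j<p. \<exists>e'\<in>Gs i. e = copy_vtx p t m i j ` e')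
       \<or> (\<exists>i<t. \<exists>j<p. e \<subseteq> part_U p i \<union> copy_W p t m i j \<and> card e = k
                             \<and> e \<inter> part_U p i \<noteq> {} \<and> e \<inter> copy_W p t m i j \<noteq> {})"
      using corona_mem by blast
    then show "e \<in> (if x div p = ?i1 then Tset k (part_U p (x div p) \<union> copy_W p t m (x div p) ?j1) x y else {})"
    proof (elim disjE exE bexE conjE)
      assume "e \<in> E0"
      then have "y \<in> {0..<p*t}" using E0 ye by blast
      then show ?thesis using y1 by simp
    next
      fix i j e' assume i: "i < t" and j: "j < p" and e': "e' \<in> Gs i" and ee: "e = copy_vtx p t m i j ` e'"
      have "x \<in> copy_W p t m i j" using copy_sub_W[of e' m p t i j] Gs i e' ee xe by auto
      then have False using W_ge x by fastforce
      then show ?thesis by blast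
    next
      fix i j assume i: "i < t" and j: "j < p" and sub: "e \<subseteq> part_U p i \<union> copy_W p t m i j"
        and ck: "card e = k"
      have xU: "x \<in> part_U p i" using sub xe W_ge x by fastforce
      have xi: "x div p = i" using xU U_iff p by blast
      have yW: "y \<in> copy_W p t m i j" using sub ye U_lt[OF p i] y1 by fastforce
      then have "(y - p*t) div m = i*p+j" using W_iff[OF m] by blast
      then have h: "i*p+j = ?q" by simp
      have ij: "i = ?i1 \<and> j = ?j1" using iffD1[OF ipj[OF j] h] .
      have ii: "i = ?i1" using ij by (rule conjunct1)
      have jj: "j = ?j1" using ij by (rule conjunct2)
      have c: "x div p = ?i1" using xi ii by simp
      have s2: "part_U p i \<union> copy_W p t m i j = part_U p (x div p) \<union> copy_W p t m (x div p) ?j1"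
        by (simp add: xi[symmetric] jj[symmetric])
      have "e \<in> Tset k (part_U p (x div p) \<union> copy_W p t m (x div p) ?j1) x y"
        unfolding Tset_def using sub s2 ck xe ye by auto
      then show ?thesis unfolding if_P[OF c] .
    qed
  next
    fix e assume e: "e \<in> (if x div p = ?i1 then Tset k (part_U p (x div p) \<union> copy_W p t m (x div p) ?j1) x y else {})"
    then have xi: "x div p = ?i1" by (auto split: if_splits)
    have eT0: "e \<in> Tset k (part_U p (x div p) \<union> copy_W p t m (x div p) ?j1) x y" using e unfolding if_P[OF xi] .
    then have eT: "e \<in> Tset k (part_U p ?i1 \<union> copy_W p t m ?i1 ?j1) x y" unfolding xi .
    then have sub: "e \<subseteq> part_U p ?i1 \<union> copy_W p t m ?i1 ?j1" and ck: "card e = k" and xe: "x \<in> e" and ye: "y \<in> e"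
      unfolding Tset_def by auto
    have eU: "e \<inter> part_U p ?i1 \<noteq> {}" using xe xi U_iff[OF p, of x ?i1] by auto
    have eW: "e \<inter> copy_W p t m ?i1 ?j1 \<noteq> {}" using ye yW by auto
    have "e \<in> corona_edges k p t m E0 Gs"
      unfolding corona_mem using i1 j1 sub ck eU eW by blast
    then show "e \<in> {e \<in> corona_edges k p t m E0 Gs. x\<in>e \<and> y\<in>e}" using xe ye by auto
  qed
qed

lemma card_C2:
  assumes p: "0<p" and m: "0<m" and E0: "\<forall>e\<in>E0. e \<subseteq> {0..<p*t}"
    and Gs: "\<forall>i<t. \<forall>e\<in>Gs i. e \<subseteq> {0..<m}" and x: "x < p*t" and y1: "p*t \<le> y" and y2: "y < p*t + t*p*m"
  shows "card {e \<in> corona_edges k p t m E0 Gs. x\<in>e \<and> y\<in>e} =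
     (if x div p = (y - p*t) div m div p then binom (p+m-2) (int k - 2) else 0)"
proof (cases "x div p = (y - p*t) div m div p")
  case False
  then show ?thesis by (subst F_C2[OF assms]) simp
next
  case True
  let ?q = "(y - p*t) div m"
  let ?i = "x div p" and ?j1 = "?q mod p"
  have i: "?i < t" using x p by (simp add: div_less_iff_less_mult mult.commute)
  have yW: "y \<in> copy_W p t m ?i ?j1" unfolding W_iff[OF m] using y1 True by simp
  have xU: "x \<in> part_U p ?i" using U_iff[OF p] by simp
  have xy: "x \<noteq> y" using x y1 by simp
  have "card (Tset k (part_U p ?i \<union> copy_W p t m ?i ?j1) x y) = binom (card (part_U p ?i \<union> copy_W p t m ?i ?j1) - 2) (int k - 2)"
    unfolding Tset_def by (rule card_pairs) (use xU yW xy in \<open>auto simp: part_U_def copy_W_eq\<close>)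
  then have "card (Tset k (part_U p ?i \<union> copy_W p t m ?i ?j1) x y) = binom (p+m-2) (int k - 2)"
    by (simp only: card_UW[OF p i])
  then show ?thesis by (subst F_C2[OF assms]) (simp only: if_P[OF True])
qed

lemma F_C4:
  assumes p: "0<p" and m: "0<m" and E0: "\<forall>e\<in>E0. e \<subseteq> {0..<p*t}"
    and Gs: "\<forall>i<t. \<forall>e\<in>Gs i. e \<subseteq> {0..<m}"
    and x1: "p*t \<le> x" and x2: "x < p*t + t*p*m" and y1: "p*t \<le> y" and y2: "y < p*t + t*p*m"
  shows "{e \<in> corona_edges k p t m E0 Gs. x\<in>e \<and> y\<in>e} =
     (if (x - p*t) div m = (y - p*t) div m
      then (\<lambda>e. copy_vtx p t m ((x - p*t) div m div p) ((x - p*t) div m mod p) ` e)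
              ` {e \<in> Gs ((x - p*t) div m div p). (x - p*t) mod m \<in> e \<and> (y - p*t) mod m \<in> e}
           \<union> (Tset k (part_U p ((x - p*t) div m div p) \<union> copy_W p t m ((x - p*t) div m div p) ((x - p*t) div m mod p)) x y
              - Tset k (copy_W p t m ((x - p*t) div m div p) ((x - p*t) div m mod p)) x y)
      else {})"
proof -
  let ?q = "(x - p*t) div m"
  let ?i = "?q div p" and ?j = "?q mod p"
  let ?vx = "(x - p*t) mod m" and ?vy = "(y - p*t) mod m"
  let ?R = "(\<lambda>e. copy_vtx p t m ?i ?j ` e) ` {e \<in> Gs ?i. ?vx \<in> e \<and> ?vy \<in> e}
           \<union> (Tset k (part_U p ?i \<union> copy_W p t m ?i ?j) x y - Tset k (copy_W p t m ?i ?j) x y)"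
  have q: "?q < t*p" using x1 x2 m by (simp add: div_less_iff_less_mult)
  have i: "?i < t" using q p by (simp add: div_less_iff_less_mult)
  have j: "?j < p" using p by simp
  have xW: "x \<in> copy_W p t m ?i ?j" unfolding W_iff[OF m] using x1 by simp
  have UW: "part_U p ?i \<inter> copy_W p t m ?i ?j = {}" using U_lt[OF p i] W_ge by fastforce
  show ?thesis
  proof (intro Set.set_eqI iffI)
    fix e assume e: "e \<in> {e \<in> corona_edges k p t m E0 Gs. x\<in>e \<and> y\<in>e}"
    then have xe: "x \<in> e" and ye: "y \<in> e" by auto
    from e have "e \<in> E0
       \<or> (\<exists>i<t. \<exists>j<p. \<exists>e'\<in>Gs i. e = copy_vtx p t m i j ` e')
       \<or> (\<exists>i<t. \<exists>j<p. e \<subseteq> part_U p i \<union> copy_W p t m i j \<and> card e = k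
                             \<and> e \<inter> part_U p i \<noteq> {} \<and> e \<inter> copy_W p t m i j \<noteq> {})"
      using corona_mem by blast
    then show "e \<in> (if ?q = (y - p*t) div m then ?R else {})"
    proof (elim disjE exE bexE conjE)
      assume "e \<in> E0"
      then have "x \<in> {0..<p*t}" using E0 xe by blast
      then show ?thesis using x1 by simp
    next
      fix i' j' e' assume i': "i' < t" and j': "j' < p" and e': "e' \<in> Gs i'" and ee: "e = copy_vtx p t m i' j' ` e'"
      have e'm: "e' \<subseteq> {0..<m}" using Gs i' e' by blast
      have "x \<in> copy_W p t m i' j'" using copy_sub_W[OF e'm] ee xe by blast
      then have "(x - p*t) div m = i'*p+j'" using W_iff[OF m] by blast
      then have h: "i'*p+j' = ?q" by simp
      have ij: "i' = ?i \<and> j' = ?j" using iffD1[OF ipj[OF j'] h] .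
      have "y \<in> copy_W p t m i' j'" using copy_sub_W[OF e'm] ee ye by blast
      then have hy: "(y - p*t) div m = i'*p+j'" using W_iff[OF m] by blast
      have c: "?q = (y - p*t) div m" using h hy by simp
      obtain vx' where vx': "vx' \<in> e'" "x = copy_vtx p t m i' j' vx'" using xe ee by blast
      obtain vy' where vy': "vy' \<in> e'" "y = copy_vtx p t m i' j' vy'" using ye ee by blast
      have "vx' < m" using vx' e'm by auto
      then have "?vx = vx'" using copy_vtx_mod[of vx' m p t i' j'] vx' by simp
      moreover have "vy' < m" using vy' e'm by auto
      then have "?vy = vy'" using copy_vtx_mod[of vy' m p t i' j'] vy' by simp
      ultimately have ex: "?vx \<in> e'" and ey: "?vy \<in> e'" using vx'(1) vy'(1) by simp_all
      have ei: "e' \<in> Gs ?i" using e' ij by simp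
      have "e' \<in> {e \<in> Gs ?i. ?vx \<in> e \<and> ?vy \<in> e}" using ei ex ey by simp
      moreover have ee': "e = copy_vtx p t m ?i ?j ` e'" using ee ij by simp
      ultimately have "e \<in> (\<lambda>e. copy_vtx p t m ?i ?j ` e) ` {e \<in> Gs ?i. ?vx \<in> e \<and> ?vy \<in> e}" by blast
      then have "e \<in> ?R" by (rule UnI1)
      then show ?thesis unfolding if_P[OF c] .
    next
      fix i' j' assume i': "i' < t" and j': "j' < p" and sub: "e \<subseteq> part_U p i' \<union> copy_W p t m i' j'"
        and ck: "card e = k" and eU: "e \<inter> part_U p i' \<noteq> {}"
      have "x \<in> copy_W p t m i' j'" using sub xe U_lt[OF p i'] x1 by fastforce
      then have "(x - p*t) div m = i'*p+j'" using W_iff[OF m] by blast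
      then have h: "i'*p+j' = ?q" by simp
      have ij: "i' = ?i \<and> j' = ?j" using iffD1[OF ipj[OF j'] h] .
      have "y \<in> copy_W p t m i' j'" using sub ye U_lt[OF p i'] y1 by fastforce
      then have hy: "(y - p*t) div m = i'*p+j'" using W_iff[OF m] by blast
      have c: "?q = (y - p*t) div m" using h hy by simp
      have sub': "e \<subseteq> part_U p ?i \<union> copy_W p t m ?i ?j" using sub ij by simp
      have eU': "e \<inter> part_U p ?i \<noteq> {}" using eU ij by simp
      have "\<not> e \<subseteq> copy_W p t m ?i ?j" using eU' UW by blast
      then have "e \<in> Tset k (part_U p ?i \<union> copy_W p t m ?i ?j) x y - Tset k (copy_W p t m ?i ?j) x y"
        unfolding Tset_def using sub' ck xe ye by blast
      then have "e \<in> ?R" by (rule UnI2)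
      then show ?thesis unfolding if_P[OF c] .
    qed
  next
    fix e assume e: "e \<in> (if ?q = (y - p*t) div m then ?R else {})"
    then have c: "?q = (y - p*t) div m" by (auto split: if_splits)
    have eR: "e \<in> ?R" using e unfolding if_P[OF c] .
    have yW: "y \<in> copy_W p t m ?i ?j" unfolding W_iff[OF m] using y1 c by simp
    show "e \<in> {e \<in> corona_edges k p t m E0 Gs. x\<in>e \<and> y\<in>e}"
    proof (rule UnE[OF eR])
      assume "e \<in> (\<lambda>e. copy_vtx p t m ?i ?j ` e) ` {e \<in> Gs ?i. ?vx \<in> e \<and> ?vy \<in> e}"
      then obtain e' where e': "e' \<in> Gs ?i" "?vx \<in> e'" "?vy \<in> e'" and ee: "e = copy_vtx p t m ?i ?j ` e'" by blast
      have "e \<in> corona_edges k p t m E0 Gs" unfolding corona_mem using i j e' ee by blast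
      moreover have "x = copy_vtx p t m ?i ?j ?vx" by (rule vtx_decomp[OF m x1]) simp
      then have "x \<in> e" using ee e' by blast
      moreover have "y = copy_vtx p t m ?i ?j ?vy" by (rule vtx_decomp[OF m y1]) (simp add: c[symmetric])
      then have "y \<in> e" using ee e' by blast
      ultimately show ?thesis by blast
    next
      assume eT: "e \<in> Tset k (part_U p ?i \<union> copy_W p t m ?i ?j) x y - Tset k (copy_W p t m ?i ?j) x y"
      then have sub: "e \<subseteq> part_U p ?i \<union> copy_W p t m ?i ?j" and ck: "card e = k" and xe: "x \<in> e" and ye: "y \<in> e"
        and ns: "\<not> e \<subseteq> copy_W p t m ?i ?j"
        unfolding Tset_def by auto
      have eU: "e \<inter> part_U p ?i \<noteq> {}" using sub ns by blast
      have eW: "e \<inter> copy_W p t m ?i ?j \<noteq> {}" using xe xW by blast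
      have "e \<in> corona_edges k p t m E0 Gs"
        unfolding corona_mem using i j sub ck eU eW by blast
      then show ?thesis using xe ye by blast
    qed
  qed
qed

lemma card_C4:
  assumes p: "0<p" and m: "0<m" and E0: "\<forall>e\<in>E0. e \<subseteq> {0..<p*t}"
    and Gs: "\<forall>i<t. \<forall>e\<in>Gs i. e \<subseteq> {0..<m}"
    and x1: "p*t \<le> x" and x2: "x < p*t + t*p*m" and y1: "p*t \<le> y" and y2: "y < p*t + t*p*m" and xy: "x \<noteq> y"
  shows "real (card {e \<in> corona_edges k p t m E0 Gs. x\<in>e \<and> y\<in>e}) =
     (if (x - p*t) div m = (y - p*t) div m
      then real (card {e \<in> Gs ((x - p*t) div m div p). (x - p*t) mod m \<in> e \<and> (y - p*t) mod m \<in> e})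
           + (real (binom (p+m-2) (int k - 2)) - real (binom (m-2) (int k - 2)))
      else 0)"
proof (cases "(x - p*t) div m = (y - p*t) div m")
  case False
  then show ?thesis by (subst F_C4[OF p m E0 Gs x1 x2 y1 y2]) simp
next
  case c: True
  let ?q = "(x - p*t) div m"
  let ?i = "?q div p" and ?j = "?q mod p"
  let ?vx = "(x - p*t) mod m" and ?vy = "(y - p*t) mod m"
  let ?F = "{e \<in> Gs ?i. ?vx \<in> e \<and> ?vy \<in> e}"
  let ?A = "(\<lambda>e. copy_vtx p t m ?i ?j ` e) ` ?F"
  let ?B = "Tset k (part_U p ?i \<union> copy_W p t m ?i ?j) x y - Tset k (copy_W p t m ?i ?j) x y"
  have q: "?q < t*p" using x1 x2 m by (simp add: div_less_iff_less_mult)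
  have i: "?i < t" using q p by (simp add: div_less_iff_less_mult)
  have xW: "x \<in> copy_W p t m ?i ?j" unfolding W_iff[OF m] using x1 by simp
  have yW: "y \<in> copy_W p t m ?i ?j" unfolding W_iff[OF m] using y1 c by simp
  have eq: "{e \<in> corona_edges k p t m E0 Gs. x\<in>e \<and> y\<in>e} = ?A \<union> ?B"
    by (subst F_C4[OF p m E0 Gs x1 x2 y1 y2]) (simp only: if_P[OF c])
  have finG: "finite (Gs ?i)" by (rule finite_subset[of _ "Pow {0..<m}"]) (use Gs i in auto)
  have finA: "finite ?A" using finG by simp
  have finB: "finite ?B" unfolding Tset_def
    by (rule finite_subset[of _ "Pow (part_U p ?i \<union> copy_W p t m ?i ?j)"]) (auto simp: part_U_def copy_W_eq)
  have disj: "?A \<inter> ?B = {}"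
  proof (rule ccontr)
    assume "?A \<inter> ?B \<noteq> {}"
    then obtain e e' where e': "e' \<in> ?F" and ee: "e = copy_vtx p t m ?i ?j ` e'" and eB: "e \<in> ?B" by blast
    have "e' \<subseteq> {0..<m}" using Gs i e' by blast
    then have "e \<subseteq> copy_W p t m ?i ?j" using ee copy_sub_W by blast
    moreover have "e \<in> Tset k (part_U p ?i \<union> copy_W p t m ?i ?j) x y" using eB by blast
    moreover have "e \<notin> Tset k (copy_W p t m ?i ?j) x y" using eB by blast
    ultimately show False unfolding Tset_def by blast
  qed
  have inj: "inj_on (\<lambda>e. copy_vtx p t m ?i ?j ` e) ?F"
    using copy_vtx_inj by (intro inj_onI) (simp add: inj_image_eq_iff)
  have cA: "card ?A = card ?F" using inj by (rule card_image)
  have cB: "real (card ?B) = real (binom (card (part_U p ?i \<union> copy_W p t m ?i ?j) - 2) (int k - 2))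
             - real (binom (card (copy_W p t m ?i ?j) - 2) (int k - 2))"
    by (rule card_Tdiff) (use xW yW xy in \<open>auto simp: part_U_def copy_W_eq\<close>)
  have "card {e \<in> corona_edges k p t m E0 Gs. x\<in>e \<and> y\<in>e} = card ?A + card ?B"
    unfolding eq by (rule card_Un_disjoint[OF finA finB disj])
  then have "real (card {e \<in> corona_edges k p t m E0 Gs. x\<in>e \<and> y\<in>e}) = real (card ?F) + real (card ?B)"
    using cA by simp
  also have "\<dots> = real (card ?F) + (real (binom (p+m-2) (int k - 2)) - real (binom (m-2) (int k - 2)))"
    using cB by (simp only: card_UW[OF p i] card_W)
  finally show ?thesis unfolding if_P[OF c] .
qed



lemma mat_mult_entry:
  fixes f g :: "nat \<times> nat \<Rightarrow> real"
  assumes "i < nr" "j < nc"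
  shows "(mat nr n f * mat n nc g) $$ (i,j) = (\<Sum>z<n. f (i,z) * g (z,j))"
  using assms by (simp add: scalar_prod_def row_def col_def lessThan_atLeast0)

lemma sum_block:
  fixes g :: "nat \<Rightarrow> real"
  assumes q: "q < n" and m: "0 < m"
  shows "(\<Sum>z<n*m. if z div m = q then g (z mod m) else 0) = (\<Sum>w<m. g w)"
proof -
  have "(\<Sum>z<n*m. if z div m = q then g (z mod m) else 0) = (\<Sum>z\<in>{z\<in>{..<n*m}. z div m = q}. g (z mod m))"
    by (rule sum.inter_filter[symmetric]) simp
  also have "{z\<in>{..<n*m}. z div m = q} = {0 + q*m..<m + q*m}"
  proof -
    have "q*m + m \<le> n*m" using q by (metis Suc_leI add.commute mult_Suc mult_le_mono1)
    then show ?thesis using div_eq_iff[OF m] by auto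
  qed
  also have "(\<Sum>z\<in>{0 + q*m..<m + q*m}. g (z mod m)) = (\<Sum>w\<in>{0..<m}. g ((w + q*m) mod m))"
    by (rule sum.shift_bounds_nat_ivl)
  also have "\<dots> = (\<Sum>w\<in>{0..<m}. g w)" by (rule sum.cong) auto
  finally show ?thesis by (simp add: lessThan_atLeast0)
qed

lemma adj_rowsum:
  assumes reg: "kr_regular {0..<m} E k r" and v: "v < m"
  shows "(\<Sum>w<m. adj_mat m E $$ (v,w)) = real r * (real k - 1)"
proof -
  have hyp: "\<forall>e\<in>E. e \<subseteq> {0..<m} \<and> card e = k" and rv: "card {e\<in>E. v \<in> e} = r"
    using reg v unfolding kr_regular_def k_uniform_def hypergraph_def by auto
  let ?Ev = "{e\<in>E. v \<in> e}"
  let ?W = "{..<m} - {v}"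
  have finE: "finite E" by (rule finite_subset[of _ "Pow {0..<m}"]) (use hyp in auto)
  have "(\<Sum>w<m. adj_mat m E $$ (v,w)) = (\<Sum>w<m. if w = v then 0 else real (card {e\<in>E. v \<in> e \<and> w \<in> e}))"
    by (rule sum.cong) (use v in \<open>auto simp: adj_mat_def\<close>)
  also have "\<dots> = (\<Sum>w\<in>?W. real (card {e\<in>?Ev. w \<in> e}))"
  proof -
    have "(\<Sum>w<m. if w = v then 0 else real (card {e\<in>E. v \<in> e \<and> w \<in> e}))
          = (\<Sum>w\<in>?W. (if w = v then 0 else real (card {e\<in>E. v \<in> e \<and> w \<in> e})))
            + (\<Sum>w\<in>{v}. (if w = v then 0 else real (card {e\<in>E. v \<in> e \<and> w \<in> e})))"
      using v by (subst sum.subset_diff[of "{v}" "{..<m}"]) auto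
    also have "\<dots> = (\<Sum>w\<in>?W. real (card {e\<in>?Ev. w \<in> e}))"
    proof -
      have "\<And>w. {e\<in>E. v \<in> e \<and> w \<in> e} = {e\<in>?Ev. w \<in> e}" by blast
      then show ?thesis by simp
    qed
    finally show ?thesis .
  qed
  also have "\<dots> = (\<Sum>w\<in>?W. \<Sum>e\<in>?Ev. if w \<in> e then 1 else 0)"
  proof (rule sum.cong[OF refl])
    fix w
    have "real (card {e\<in>?Ev. w \<in> e}) = (\<Sum>e\<in>{e\<in>?Ev. w \<in> e}. 1)" by simp
    also have "\<dots> = (\<Sum>e\<in>?Ev. if w \<in> e then 1 else 0)"
      by (rule sum.inter_filter) (use finE in simp)
    finally show "real (card {e\<in>?Ev. w \<in> e}) = (\<Sum>e\<in>?Ev. if w \<in> e then 1 else 0)" .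
  qed
  also have "\<dots> = (\<Sum>e\<in>?Ev. \<Sum>w\<in>?W. if w \<in> e then 1 else 0)" by (rule sum.swap)
  also have "\<dots> = (\<Sum>e\<in>?Ev. real k - 1)"
  proof (rule sum.cong[OF refl])
    fix e assume e: "e \<in> ?Ev"
    have esub: "e \<subseteq> {0..<m}" and ck: "card e = k" using hyp e by auto
    have fe: "finite e" using esub finite_subset by blast
    have "(\<Sum>w\<in>?W. if w \<in> e then 1 else (0::real)) = (\<Sum>w\<in>{w\<in>?W. w \<in> e}. 1)"
      by (rule sum.inter_filter[symmetric]) simp
    also have "{w\<in>?W. w \<in> e} = e - {v}" using esub by auto
    also have "(\<Sum>w\<in>e - {v}. (1::real)) = real (card (e - {v}))" by simp
    also have "card (e - {v}) = k - 1" using e ck fe by simp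
    also have "real (k - 1) = real k - 1" using e ck fe
      by (metis card_gt_0_iff empty_iff mem_Collect_eq of_nat_diff Suc_leI One_nat_def of_nat_1)
    finally show "(\<Sum>w\<in>?W. if w \<in> e then 1 else (0::real)) = real k - 1" .
  qed
  also have "\<dots> = real r * (real k - 1)" using rv by simp
  finally show ?thesis .
qed



lemma mult_entry:
  fixes A B :: "real mat"
  assumes "i < dim_row A" "j < dim_col B" "dim_col A = dim_row B"
  shows "(A * B) $$ (i,j) = (\<Sum>z<dim_col A. A $$ (i,z) * B $$ (z,j))"
  using assms by (simp add: scalar_prod_def lessThan_atLeast0)

lemma bdiag_entry:
  "x < n*m \<Longrightarrow> z < n*m \<Longrightarrow> bdiag n m F $$ (x,z) = (if x div m = z div m then F (x div m) $$ (x mod m, z mod m) else 0)"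
  unfolding bdiag_def by simp

theorem theorem3p1:
  fixes k r m p t :: nat and E0 :: "nat set set" and Gs :: "nat \<Rightarrow> nat set set" and lam :: real
    and a b c :: real and Y :: "nat \<Rightarrow> real mat"
  assumes G0: "k_uniform {0..<p*t} E0 k"
    and p: "p \<ge> 1"
    and m: "m \<ge> 2"
    and Gi: "\<forall>i<t. kr_regular {0..<m} (Gs i) k r"
    and a_def: "a = (if p \<ge> 2 then real p * (real (binom (p+m-2) (int k - 2)) - real (binom (p-2) (int k - 2))) else 0)"
    and b_def: "b = real (binom (p+m-2) (int k - 2))"
    and c_def: "c = real (binom (p+m-2) (int k - 2)) - real (binom (m-2) (int k - 2))"
    and Y_def: "\<forall>i<t. Y i = adj_mat m (Gs i) + c \<cdot>\<^sub>m (J_mat m - 1\<^sub>m m)"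
    and inv: "\<forall>i<t. invertible_mat (Y i - lam \<cdot>\<^sub>m 1\<^sub>m m)"
  shows "char_val (adj_mat (corona_size p t m) (corona_edges k p t m E0 Gs)) lam
       = (\<Prod>i<t. det (Y i - lam \<cdot>\<^sub>m 1\<^sub>m m)) ^ p
         * det (adj_mat (p*t) E0
             + kron (1\<^sub>m t)
                 ((a - b^2 * real p * real m / (real r * (real k - 1) + c * (real m - 1) - lam)) \<cdot>\<^sub>m J_mat p
                  - (a + lam) \<cdot>\<^sub>m 1\<^sub>m p))"
proof -
  have p0: "0 < p" using p by simp
  have m0: "0 < m" using m by simp
  have E0sub: "\<forall>e\<in>E0. e \<subseteq> {0..<p*t}" using G0 unfolding k_uniform_def hypergraph_def by auto
  have Gsub: "\<forall>i<t. \<forall>e\<in>Gs i. e \<subseteq> {0..<m}" using Gi unfolding kr_regular_def k_uniform_def hypergraph_def by blast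
  define s where "s = real r * (real k - 1) + c * (real m - 1)"
  define F where "F = (\<lambda>q. Y (q div p) - lam \<cdot>\<^sub>m 1\<^sub>m m)"
  define P where "P = mat (p*t) (p*t) (\<lambda>(x,y). if x = y then - lam else real (card {e\<in>E0. x\<in>e \<and> y\<in>e}) + (if x div p = y div p then a else 0))"
  define B where "B = mat (p*t) (t*p*m) (\<lambda>(x,y). if x div p = y div m div p then b else (0::real))"
  define C where "C = mat (t*p*m) (p*t) (\<lambda>(x,y). if x div m div p = y div p then b else (0::real))"
  define X where "X = mat (t*p*m) (p*t) (\<lambda>(x,y). if x div m div p = y div p then b / (s - lam) else (0::real))"
  define Q where "Q = bdiag (t*p) m F"
  define Z where "Z = (a - b^2 * real p * real m / (real r * (real k - 1) + c * (real m - 1) - lam)) \<cdot>\<^sub>m J_mat p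
                  - (a + lam) \<cdot>\<^sub>m 1\<^sub>m p"
  define T where "T = adj_mat (p*t) E0 + kron (1\<^sub>m t) Z"
  have Ycar: "\<And>i. i < t \<Longrightarrow> Y i \<in> carrier_mat m m"
  proof -
    fix i assume i: "i < t"
    have Yi: "Y i = adj_mat m (Gs i) + c \<cdot>\<^sub>m (J_mat m - 1\<^sub>m m)" using Y_def i by blast
    have "adj_mat m (Gs i) \<in> carrier_mat m m" unfolding adj_mat_def by simp
    moreover have "c \<cdot>\<^sub>m (J_mat m - 1\<^sub>m m) \<in> carrier_mat m m" unfolding J_mat_def carrier_mat_def by simp
    ultimately show "Y i \<in> carrier_mat m m" unfolding Yi by simp
  qed
  have Fcar: "\<And>q. q < t*p \<Longrightarrow> F q \<in> carrier_mat m m"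
  proof -
    fix q assume "q < t*p"
    then have "q div p < t" using p0 by (simp add: div_less_iff_less_mult)
    then show "F q \<in> carrier_mat m m" unfolding F_def using Ycar by auto
  qed
  have Pc: "P \<in> carrier_mat (p*t) (p*t)" unfolding P_def by simp
  have Bc: "B \<in> carrier_mat (p*t) (t*p*m)" unfolding B_def by simp
  have Cc: "C \<in> carrier_mat (t*p*m) (p*t)" unfolding C_def by simp
  have Xc: "X \<in> carrier_mat (t*p*m) (p*t)" unfolding X_def by simp
  have Qc: "Q \<in> carrier_mat (t*p*m) (t*p*m)" unfolding Q_def bdiag_def by simp
  have stepA: "adj_mat (corona_size p t m) (corona_edges k p t m E0 Gs) - lam \<cdot>\<^sub>m 1\<^sub>m (corona_size p t m)
      = four_block_mat P B C Q"
  proof (rule eq_matI)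
    show "dim_row (adj_mat (corona_size p t m) (corona_edges k p t m E0 Gs) - lam \<cdot>\<^sub>m 1\<^sub>m (corona_size p t m))
      = dim_row (four_block_mat P B C Q)" using Pc Qc by (simp add: corona_size_def)
    show "dim_col (adj_mat (corona_size p t m) (corona_edges k p t m E0 Gs) - lam \<cdot>\<^sub>m 1\<^sub>m (corona_size p t m))
      = dim_col (four_block_mat P B C Q)" using Pc Qc by (simp add: corona_size_def)
    fix x y assume "x < dim_row (four_block_mat P B C Q)" "y < dim_col (four_block_mat P B C Q)"
    then have x: "x < p*t + t*p*m" and y: "y < p*t + t*p*m" using Pc Qc by auto
    let ?cnt = "real (card {e \<in> corona_edges k p t m E0 Gs. x\<in>e \<and> y\<in>e})"
    have L: "(adj_mat (corona_size p t m) (corona_edges k p t m E0 Gs) - lam \<cdot>\<^sub>m 1\<^sub>m (corona_size p t m)) $$ (x,y)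
        = (if x = y then - lam else ?cnt)"
      using x y by (simp add: corona_size_def adj_mat_def)
    have R: "four_block_mat P B C Q $$ (x,y) = (if x < p*t then if y < p*t then P $$ (x,y) else B $$ (x, y - p*t)
       else if y < p*t then C $$ (x - p*t, y) else Q $$ (x - p*t, y - p*t))"
      using x y Pc Qc by simp
    show "(adj_mat (corona_size p t m) (corona_edges k p t m E0 Gs) - lam \<cdot>\<^sub>m 1\<^sub>m (corona_size p t m)) $$ (x,y)
        = four_block_mat P B C Q $$ (x,y)"
      unfolding L R
    proof (cases "x < p*t"; cases "y < p*t")
      assume x1: "x < p*t" and y1: "y < p*t"
      show "(if x = y then - lam else ?cnt) = (if x < p*t then if y < p*t then P $$ (x,y) else B $$ (x, y - p*t)
       else if y < p*t then C $$ (x - p*t, y) else Q $$ (x - p*t, y - p*t))"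
      proof (cases "x = y")
        case True then show ?thesis using x1 y1 by (simp add: P_def)
      next
        case False
        have cnt: "?cnt = real (card {e\<in>E0. x\<in>e \<and> y\<in>e})
           + (if x div p = y div p then real p * (real (binom (p+m-2) (int k - 2)) - real (binom (p-2) (int k - 2))) else 0)"
          by (rule card_C1[OF p0 m0 E0sub Gsub x1 y1 False])
        have "(if x div p = y div p then real p * (real (binom (p+m-2) (int k - 2)) - real (binom (p-2) (int k - 2))) else 0)
            = (if x div p = y div p then a else 0)"
        proof (cases "x div p = y div p")
          case True
          have "p \<noteq> 1" using True False by auto
          then have "p \<ge> 2" using p by simp
          then show ?thesis using True a_def by simp
        qed simp
        then show ?thesis using x1 y1 False cnt by (simp add: P_def)
      qed
    next
      assume x1: "x < p*t" and y1: "\<not> y < p*t"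
      have "?cnt = real (if x div p = (y - p*t) div m div p then binom (p+m-2) (int k - 2) else 0)"
        using card_C2[OF p0 m0 E0sub Gsub x1 _ y, of k] y1 by simp
      then show "(if x = y then - lam else ?cnt) = (if x < p*t then if y < p*t then P $$ (x,y) else B $$ (x, y - p*t)
       else if y < p*t then C $$ (x - p*t, y) else Q $$ (x - p*t, y - p*t))"
        using x1 y1 y b_def by (auto simp: B_def)
    next
      assume x1: "\<not> x < p*t" and y1: "y < p*t"
      have sw: "{e \<in> corona_edges k p t m E0 Gs. x\<in>e \<and> y\<in>e} = {e \<in> corona_edges k p t m E0 Gs. y\<in>e \<and> x\<in>e}" by blast
      have "?cnt = real (if y div p = (x - p*t) div m div p then binom (p+m-2) (int k - 2) else 0)"
        unfolding sw using card_C2[OF p0 m0 E0sub Gsub y1 _ x, of k] x1 by simp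
      then show "(if x = y then - lam else ?cnt) = (if x < p*t then if y < p*t then P $$ (x,y) else B $$ (x, y - p*t)
       else if y < p*t then C $$ (x - p*t, y) else Q $$ (x - p*t, y - p*t))"
        using x1 y1 x b_def by (auto simp: C_def)
    next
      assume x1: "\<not> x < p*t" and y1: "\<not> y < p*t"
      have x2: "x - p*t < t*p*m" and y2: "y - p*t < t*p*m" using x y x1 y1 by auto
      let ?vx = "(x - p*t) mod m" and ?vy = "(y - p*t) mod m"
      let ?q = "(x - p*t) div m"
      have Qe: "Q $$ (x - p*t, y - p*t) = (if ?q = (y - p*t) div m then F ?q $$ (?vx, ?vy) else 0)"
        unfolding Q_def by (rule bdiag_entry[OF x2 y2])
      have q: "?q < t*p" using x2 m0 by (simp add: div_less_iff_less_mult)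
      have i: "?q div p < t" using q p0 by (simp add: div_less_iff_less_mult)
      have vm: "?vx < m" "?vy < m" using m0 by simp_all
      have Fe: "F ?q $$ (?vx, ?vy) = (if ?vx = ?vy then - lam else real (card {e \<in> Gs (?q div p). ?vx \<in> e \<and> ?vy \<in> e}) + c)"
      proof -
        have Yi: "Y (?q div p) = adj_mat m (Gs (?q div p)) + c \<cdot>\<^sub>m (J_mat m - 1\<^sub>m m)" using Y_def i by blast
        show ?thesis unfolding F_def Yi using vm by (simp add: adj_mat_def J_mat_def)
      qed
      show "(if x = y then - lam else ?cnt) = (if x < p*t then if y < p*t then P $$ (x,y) else B $$ (x, y - p*t)
       else if y < p*t then C $$ (x - p*t, y) else Q $$ (x - p*t, y - p*t))"
      proof (cases "x = y")
        case True then show ?thesis using x1 y1 Qe Fe by simp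
      next
        case False
        have cnt: "?cnt = (if ?q = (y - p*t) div m
             then real (card {e \<in> Gs (?q div p). ?vx \<in> e \<and> ?vy \<in> e})
                  + (real (binom (p+m-2) (int k - 2)) - real (binom (m-2) (int k - 2)))
             else 0)"
          by (rule card_C4[OF p0 m0 E0sub Gsub _ x _ y False]) (use x1 y1 in simp_all)
        have vne: "?q = (y - p*t) div m \<Longrightarrow> ?vx \<noteq> ?vy"
        proof
          assume h1: "?q = (y - p*t) div m" and h2: "?vx = ?vy"
          have "x - p*t = (x - p*t) div m * m + (x - p*t) mod m" by simp
          also have "\<dots> = (y - p*t) div m * m + (y - p*t) mod m" unfolding h1 h2 ..
          also have "\<dots> = y - p*t" by simp
          finally have "x - p*t = y - p*t" .
          then show False using False x1 y1 by simp
        qed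
        show ?thesis
        proof (cases "?q = (y - p*t) div m")
          case True
          have ne: "?vx \<noteq> ?vy" using vne True .
          have "Q $$ (x - p*t, y - p*t) = F ?q $$ (?vx, ?vy)" using Qe True by simp
          also have "\<dots> = real (card {e \<in> Gs (?q div p). ?vx \<in> e \<and> ?vy \<in> e}) + c" using Fe ne by simp
          finally have qv: "Q $$ (x - p*t, y - p*t) = real (card {e \<in> Gs (?q div p). ?vx \<in> e \<and> ?vy \<in> e}) + c" .
          have cv: "?cnt = real (card {e \<in> Gs (?q div p). ?vx \<in> e \<and> ?vy \<in> e}) + c"
            using cnt True c_def by simp
          show ?thesis using x1 y1 False qv cv by simp
        next
          case False2: False
          have qv: "Q $$ (x - p*t, y - p*t) = 0" using Qe False2 by simp
          have cv: "?cnt = 0" using cnt False2 by simp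
          show ?thesis using x1 y1 False qv cv by simp
        qed
      qed
    qed
  qed
  have rowsumY: "\<And>i v. i < t \<Longrightarrow> v < m \<Longrightarrow> (\<Sum>w<m. (Y i - lam \<cdot>\<^sub>m 1\<^sub>m m) $$ (v,w)) = s - lam"
  proof -
    fix i v assume i: "i < t" and v: "v < m"
    have "(\<Sum>w<m. (Y i - lam \<cdot>\<^sub>m 1\<^sub>m m) $$ (v,w))
        = (\<Sum>w<m. adj_mat m (Gs i) $$ (v,w) + c - (if v = w then c + lam else 0))"
      by (rule sum.cong) (use v i Y_def in \<open>auto simp: adj_mat_def J_mat_def algebra_simps\<close>)
    also have "\<dots> = (\<Sum>w<m. adj_mat m (Gs i) $$ (v,w)) + real m * c - (c + lam)"
      using v by (simp add: sum.distrib sum_subtractf)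
    also have "(\<Sum>w<m. adj_mat m (Gs i) $$ (v,w)) = real r * (real k - 1)"
      using adj_rowsum[OF _ v] Gi i by blast
    finally show "(\<Sum>w<m. (Y i - lam \<cdot>\<^sub>m 1\<^sub>m m) $$ (v,w)) = s - lam"
      unfolding s_def by (simp add: algebra_simps)
  qed
  have sne: "t > 0 \<Longrightarrow> s \<noteq> lam"
  proof
    assume t: "t > 0" and sl: "s = lam"
    let ?M = "Y 0 - lam \<cdot>\<^sub>m 1\<^sub>m m"
    let ?v = "vec m (\<lambda>_. 1::real)"
    have Mc: "?M \<in> carrier_mat m m" using Ycar[OF t] unfolding carrier_mat_def by simp
    have "?M *\<^sub>v ?v = 0\<^sub>v m"
    proof (rule eq_vecI)
      fix v assume "v < dim_vec (0\<^sub>v m :: real vec)"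
      then have v: "v < m" by simp
      have "(?M *\<^sub>v ?v) $ v = (\<Sum>w<m. ?M $$ (v,w))"
        using v Mc by (simp add: scalar_prod_def lessThan_atLeast0)
      also have "\<dots> = 0" using rowsumY[OF t v] sl by simp
      finally show "(?M *\<^sub>v ?v) $ v = 0\<^sub>v m $ v" using v by simp
    qed (use Mc in simp)
    then have "?v = 0\<^sub>v m" using invertible_kernel[OF Mc] inv t by simp
    then have "?v $ 0 = (0\<^sub>v m :: real vec) $ 0" by simp
    then show False using m0 by simp
  qed
  have stepB: "Q * X = C"
  proof (rule eq_matI)
    fix x y assume x: "x < dim_row C" and y: "y < dim_col C"
    then have x': "x < t*p*m" and y': "y < p*t" unfolding C_def by auto
    let ?q = "x div m"
    have q: "?q < t*p" using x' m0 by (simp add: div_less_iff_less_mult)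
    have i: "?q div p < t" using q p0 by (simp add: div_less_iff_less_mult)
    have "(Q * X) $$ (x,y) = (\<Sum>z<t*p*m. Q $$ (x,z) * X $$ (z,y))"
      using mult_entry[of x Q y X] x' y' Qc Xc by simp
    also have "\<dots> = (\<Sum>z<t*p*m. (if z div m = ?q then F ?q $$ (x mod m, z mod m) else 0) * X $$ (x,y))"
    proof (rule sum.cong[OF refl])
      fix z assume "z \<in> {..<t*p*m}"
      then have z: "z < t*p*m" by simp
      show "Q $$ (x,z) * X $$ (z,y) = (if z div m = ?q then F ?q $$ (x mod m, z mod m) else 0) * X $$ (x,y)"
        unfolding Q_def using bdiag_entry[of x "t*p" m z F] x' z y' by (auto simp: X_def)
    qed
    also have "\<dots> = X $$ (x,y) * (\<Sum>z<t*p*m. if z div m = ?q then F ?q $$ (x mod m, z mod m) else 0)"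
      by (simp add: sum_distrib_left mult.commute)
    also have "(\<Sum>z<t*p*m. if z div m = ?q then F ?q $$ (x mod m, z mod m) else 0) = (\<Sum>w<m. F ?q $$ (x mod m, w))"
      by (rule sum_block[OF q m0])
    also have "\<dots> = s - lam" unfolding F_def using rowsumY[OF i] m0 by simp
    finally have "(Q * X) $$ (x,y) = X $$ (x,y) * (s - lam)" .
    moreover have "t > 0" using i by simp
    ultimately show "(Q * X) $$ (x,y) = C $$ (x,y)" using sne x' y' by (simp add: X_def C_def)
  qed (use Qc Xc Cc in auto)
  have BX: "\<And>x y. x < p*t \<Longrightarrow> y < p*t \<Longrightarrow> (B * X) $$ (x,y) =
      (if x div p = y div p then real (m*p) * (b * (b / (s - lam))) else 0)"
  proof -
    fix x y assume x: "x < p*t" and y: "y < p*t"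
    have "(B * X) $$ (x,y) = (\<Sum>z<t*p*m. B $$ (x,z) * X $$ (z,y))"
      using mult_entry[of x B y X] x y Bc Xc by simp
    also have "\<dots> = (\<Sum>z<t*p*m. (if x div p = z div m div p then b else 0) * (if z div m div p = y div p then b / (s - lam) else 0))"
      by (rule sum.cong[OF refl]) (use x y in \<open>simp add: B_def X_def\<close>)
    finally have e1: "(B * X) $$ (x,y) = \<dots>" .
    show "(B * X) $$ (x,y) = (if x div p = y div p then real (m*p) * (b * (b / (s - lam))) else 0)"
    proof (cases "x div p = y div p")
      case False
      have "(\<Sum>z<t*p*m. (if x div p = z div m div p then b else 0) * (if z div m div p = y div p then b / (s - lam) else 0)) = 0"
        by (rule sum.neutral) (use False in auto)
      then show ?thesis using e1 False by simp
    next
      case True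
      have xi: "x div p < t" using x p0 by (simp add: div_less_iff_less_mult mult.commute)
      have mp: "0 < m*p" using m0 p0 by simp
      have "(\<Sum>z<t*p*m. (if x div p = z div m div p then b else 0) * (if z div m div p = y div p then b / (s - lam) else 0))
          = (\<Sum>z<t*(m*p). if z div (m*p) = x div p then (\<lambda>_. b * (b / (s - lam))) (z mod (m*p)) else 0)"
      proof -
        have tt: "t*p*m = t*(m*p)" by (simp add: mult.commute mult.left_commute)
        show ?thesis unfolding tt
          by (rule sum.cong[OF refl]) (use True in \<open>auto simp: div_mult2_eq\<close>)
      qed
      also have "\<dots> = (\<Sum>w<m*p. b * (b / (s - lam)))" by (rule sum_block[OF xi mp])
      also have "\<dots> = real (m*p) * (b * (b / (s - lam)))" by simp
      finally show ?thesis using e1 True by simp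
    qed
  qed
  have stepC: "P - B * X = T"
  proof (rule eq_matI)
    have Zc: "Z \<in> carrier_mat p p" unfolding Z_def J_mat_def carrier_mat_def by simp
    have Tdim: "dim_row T = p*t" "dim_col T = p*t" unfolding T_def kron_def using Zc by auto
    show "dim_row (P - B * X) = dim_row T" "dim_col (P - B * X) = dim_col T" using Tdim Bc Xc by auto
    fix x y assume "x < dim_row T" "y < dim_col T"
    then have x: "x < p*t" and y: "y < p*t" using Tdim by auto
    have xd: "x div p < t" using x p0 by (simp add: div_less_iff_less_mult mult.commute)
    have yd: "y div p < t" using y p0 by (simp add: div_less_iff_less_mult mult.commute)
    have xm: "x mod p < p" "y mod p < p" using p0 by simp_all
    define \<beta> where "\<beta> = b^2 * real p * real m / (real r * (real k - 1) + c * (real m - 1) - lam)"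
    have beta: "real (m*p) * (b * (b / (s - lam))) = \<beta>" unfolding \<beta>_def s_def by (simp add: power2_eq_square)
    have Zent: "Z $$ (x mod p, y mod p) = (a - \<beta>) - (a + lam) * (if x mod p = y mod p then 1 else 0)"
      unfolding Z_def \<beta>_def J_mat_def using xm by simp
    have kent: "kron (1\<^sub>m t) Z $$ (x,y) = (if x div p = y div p then 1 else 0) * Z $$ (x mod p, y mod p)"
      unfolding kron_def using x y Zc xd yd by (simp add: mult.commute)
    have Tent: "T $$ (x,y) = adj_mat (p*t) E0 $$ (x,y) + kron (1\<^sub>m t) Z $$ (x,y)"
      unfolding T_def using x y Zc by (simp add: kron_def mult.commute)
    have Pent: "(P - B * X) $$ (x,y) = P $$ (x,y) - (B * X) $$ (x,y)" using x y Bc Xc by simp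
    have eqxy: "x div p = y div p \<Longrightarrow> x mod p = y mod p \<Longrightarrow> x = y"
      by (metis div_mult_mod_eq)
    show "(P - B * X) $$ (x,y) = T $$ (x,y)"
      unfolding Pent Tent kent Zent BX[OF x y] beta
      using x y eqxy by (auto simp: P_def adj_mat_def)
  qed
  have detQ: "det Q = (\<Prod>i<t. det (Y i - lam \<cdot>\<^sub>m 1\<^sub>m m)) ^ p"
  proof -
    have "det Q = (\<Prod>q<t*p. det (F q))" unfolding Q_def by (rule det_bdiag[OF Fcar m0])
    also have "\<dots> = (\<Prod>q<t*p. det (Y (q div p) - lam \<cdot>\<^sub>m 1\<^sub>m m))" unfolding F_def ..
    also have "\<dots> = (\<Prod>i<t. det (Y i - lam \<cdot>\<^sub>m 1\<^sub>m m)) ^ p" by (rule prod_div_reindex)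
    finally show ?thesis .
  qed
  have "char_val (adj_mat (corona_size p t m) (corona_edges k p t m E0 Gs)) lam
      = det (four_block_mat P B C Q)"
    unfolding char_val_def using stepA by (simp add: adj_mat_def)
  also have "\<dots> = det (P - B * X) * det Q" by (rule schur_det[OF Pc Bc Cc Qc Xc stepB])
  also have "\<dots> = (\<Prod>i<t. det (Y i - lam \<cdot>\<^sub>m 1\<^sub>m m)) ^ p * det T" using stepC detQ by simp
  finally show ?thesis unfolding T_def Z_def .
qed


end
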